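(* Let $\alpha\in[0,1)$, let $G\in\mathcal{G}_n^m$ with strong component $G^*$ and hanging trees $T^{(1)},\dots,T^{(m)}$ ($|\mathcal{V}(T^{(i)})|=n_i$), and let $G'$ be the digraph obtained from $G$ by replacing, for each $i$, the arcs of $T^{(i)}$ by the arcs $(v_i,u)$ for all $u\in\mathcal{V}(T^{(i)})\setminus\{v_i\}$ (so each $T^{(i)}$ becomes an out-star on the same vertex set centred at $v_i$). Then $\rho_\alpha(G')\ge\rho_\alpha(G)$.
   Context: All digraphs are finite, without loops or multiple arcs. $A(G)$ is the adjacency matrix, $D^+(G)$ the diagonal matrix of outdegrees, $A_\alpha(G)=\alpha D^+(G)+(1-\alpha)A(G)$, and $\rho_\alpha(G)$ is the spectral radius (largest modulus of an eigenvalue) of $A_\alpha(G)$. A directed tree is a digraph whose underlying graph is a tree (a single vertex allowed). The class $\mathcal{G}_n^m$ ($2\le m\le n$): $G\in\mathcal{G}_n^m$ consists of a strongly connected digraph $G^*$ on $m$ vertices $v_1,\dots,v_m$ together with directed trees $T^{(1)},\dots,T^{(m)}$, where $T^{(i)}$ has $n_i\ge1$ vertices including $v_i$, the sets $\mathcal{V}(T^{(i)})$ are pairwise disjoint, $\mathcal{V}(T^{(i)})\cap\mathcal{V}(G^* )=\{v_i\}$, $n=\sum_i n_i$, and the arcs of $G$ are those of $G^*$ and of the $T^{(i)}$. The vertices of $G^*$ are labeled so that $d_{G^*}^+(v_1)\ge d_{G^*}^+(v_2)\ge\cdots\ge d_{G^*}^+(v_m)$. *)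

theory Defs
  imports Complex_Main
begin

definition digraph :: "'a set \<Rightarrow> ('a \<times> 'a) set \<Rightarrow> bool" where
  "digraph V E \<longleftrightarrow> finite V \<and> E \<subseteq> V \<times> V \<and> (\<forall>v. (v, v) \<notin> E)"

definition outdeg :: "('a \<times> 'a) set \<Rightarrow> 'a \<Rightarrow> nat" where
  "outdeg E v = card {u. (v, u) \<in> E}"

definition strongly_connected :: "'a set \<Rightarrow> ('a \<times> 'a) set \<Rightarrow> bool" where
  "strongly_connected V E \<longleftrightarrow> digraph V E \<and> (\<forall>u\<in>V. \<forall>w\<in>V. (u, w) \<in> E\<^sup>*)"

text \<open>Directed tree: the underlying (multi)graph is a tree, i.e. it is connected, has
  |V|-1 edges and no pair of opposite arcs (which would give a double edge).\<close>
definition directed_tree :: "'a set \<Rightarrow> ('a \<times> 'a) set \<Rightarrow> bool" where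
  "directed_tree V E \<longleftrightarrow> digraph V E \<and> V \<noteq> {}
     \<and> (\<forall>u v. (u, v) \<in> E \<longrightarrow> (v, u) \<notin> E)
     \<and> (\<forall>u\<in>V. \<forall>w\<in>V. (u, w) \<in> (E \<union> E\<inverse>)\<^sup>*)
     \<and> card E = card V - 1"

definition A_alpha :: "real \<Rightarrow> ('a \<times> 'a) set \<Rightarrow> 'a \<Rightarrow> 'a \<Rightarrow> real" where
  "A_alpha \<alpha> E v w = (if v = w then \<alpha> * real (outdeg E v) else 0)
                    + (1 - \<alpha>) * (if (v, w) \<in> E then 1 else 0)"

definition is_eigenvalue :: "'a set \<Rightarrow> ('a \<Rightarrow> 'a \<Rightarrow> real) \<Rightarrow> complex \<Rightarrow> bool" where
  "is_eigenvalue V M mu \<longleftrightarrow> (\<exists>x :: 'a \<Rightarrow> complex. (\<exists>v\<in>V. x v \<noteq> 0) \<and>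
      (\<forall>v\<in>V. (\<Sum>w\<in>V. complex_of_real (M v w) * x w) = mu * x v))"

definition spectral_radius :: "'a set \<Rightarrow> ('a \<Rightarrow> 'a \<Rightarrow> real) \<Rightarrow> real" where
  "spectral_radius V M = Max {cmod mu | mu. is_eigenvalue V M mu}"

definition rho_alpha :: "real \<Rightarrow> 'a set \<Rightarrow> ('a \<times> 'a) set \<Rightarrow> real" where
  "rho_alpha \<alpha> V E = spectral_radius V (A_alpha \<alpha> E)"

text \<open>Membership in the class G_n^m: strong component (Vs, Es) with m = card Vs \<ge> 2 vertices;
  for each c \<in> Vs a hanging directed tree (T c, F c) containing c.\<close>
definition in_class_G ::
  "'a set \<Rightarrow> ('a \<times> 'a) set \<Rightarrow> 'a set \<Rightarrow> ('a \<times> 'a) set \<Rightarrow> ('a \<Rightarrow> 'a set) \<Rightarrow> ('a \<Rightarrow> ('a \<times> 'a) set) \<Rightarrow> bool"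
  where
  "in_class_G V E Vs Es T F \<longleftrightarrow>
     strongly_connected Vs Es \<and> card Vs \<ge> 2
     \<and> (\<forall>c\<in>Vs. c \<in> T c \<and> directed_tree (T c) (F c) \<and> T c \<inter> Vs = {c})
     \<and> (\<forall>c\<in>Vs. \<forall>d\<in>Vs. c \<noteq> d \<longrightarrow> T c \<inter> T d = {})
     \<and> V = (\<Union>c\<in>Vs. T c)
     \<and> E = Es \<union> (\<Union>c\<in>Vs. F c)"

definition star_replace :: "'a set \<Rightarrow> ('a \<times> 'a) set \<Rightarrow> ('a \<Rightarrow> 'a set) \<Rightarrow> ('a \<times> 'a) set" where
  "star_replace Vs Es T = Es \<union> (\<Union>c\<in>Vs. {(c, u) | u. u \<in> T c - {c}})"

end

theory Submission
  imports Defs "Jordan_Normal_Form.Spectral_Radius"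
begin
fun qpow :: "(nat \<Rightarrow> nat \<Rightarrow> real) \<Rightarrow> nat \<Rightarrow> nat \<Rightarrow> nat \<Rightarrow> nat \<Rightarrow> real" where
  "qpow a n 0 i j = (if i = j then 1 else 0)"
| "qpow a n (Suc k) i j = (\<Sum>l<n. qpow a n k i l * a l j)"

lemma qpow_nonneg:
  assumes "\<And>i j. i < n \<Longrightarrow> j < n \<Longrightarrow> a i j \<ge> 0" "j < n"
  shows "qpow a n k i j \<ge> 0"
  using assms(2)
proof (induction k arbitrary: j)
  case (Suc k)
  show ?case using Suc assms(1) by (auto intro!: sum_nonneg mult_nonneg_nonneg)
qed simp

lemma qpow_grow:
  assumes a: "\<And>i j. i < n \<Longrightarrow> j < n \<Longrightarrow> a i j \<ge> 0"
    and zz: "\<And>j. j < n \<Longrightarrow> zz j \<ge> 0" and q: "q \<ge> 0"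
    and ineq: "\<And>l. l < n \<Longrightarrow> q * zz l \<le> (\<Sum>j<n. a l j * zz j)"
    and i: "i < n"
  shows "q ^ k * zz i \<le> (\<Sum>j<n. qpow a n k i j * zz j)"
proof (induction k)
  case 0
  have "(\<Sum>j<n. qpow a n 0 i j * zz j) = (\<Sum>j<n. if j = i then zz i else 0)"
    by (rule sum.cong) auto
  also have "\<dots> = zz i" using i by simp
  finally show ?case by simp
next
  case (Suc k)
  have "(\<Sum>j<n. qpow a n (Suc k) i j * zz j) = (\<Sum>j<n. \<Sum>l<n. qpow a n k i l * a l j * zz j)"
    by (simp add: sum_distrib_right)
  also have "\<dots> = (\<Sum>l<n. \<Sum>j<n. qpow a n k i l * a l j * zz j)" by (rule sum.swap)
  also have "\<dots> = (\<Sum>l<n. qpow a n k i l * (\<Sum>j<n. a l j * zz j))"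
    by (simp add: sum_distrib_left mult.assoc)
  also have "\<dots> \<ge> (\<Sum>l<n. qpow a n k i l * (q * zz l))"
    by (rule sum_mono, rule mult_left_mono) (auto intro: ineq qpow_nonneg a)
  finally have 1: "(\<Sum>l<n. qpow a n k i l * (q * zz l)) \<le> (\<Sum>j<n. qpow a n (Suc k) i j * zz j)" .
  have "(\<Sum>l<n. qpow a n k i l * (q * zz l)) = q * (\<Sum>l<n. qpow a n k i l * zz l)"
    by (simp add: sum_distrib_left algebra_simps)
  also have "\<dots> \<ge> q * (q ^ k * zz i)" using Suc.IH q by (rule mult_left_mono)
  finally show ?case using 1 by simp
qed


lemma sum_reidx:
  assumes bij: "bij_betw f {0..<(n::nat)} V"
  shows "(\<Sum>w\<in>V. g w) = (\<Sum>j<n. g (f j))"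
proof -
  have b: "bij_betw f {..<n} V" using bij by (simp add: atLeast0LessThan)
  show ?thesis by (rule sum.reindex_bij_betw[OF b, symmetric])
qed

lemma bridge:
  fixes V :: "'a set" and B :: "'a \<Rightarrow> 'a \<Rightarrow> real" and f :: "nat \<Rightarrow> 'a"
  assumes bij: "bij_betw f {0..<(n::nat)} V"
  shows "is_eigenvalue V B mu \<longleftrightarrow> eigenvalue (mat n n (\<lambda>(i,j). complex_of_real (B (f i) (f j)))) mu"
    (is "_ \<longleftrightarrow> eigenvalue ?A mu")
proof
  have fV: "\<And>i. i < n \<Longrightarrow> f i \<in> V" using bij by (auto simp: bij_betw_def)
  assume "is_eigenvalue V B mu"
  then obtain x v0 where v0: "v0 \<in> V" "x v0 \<noteq> 0"
    and eq: "\<And>v. v \<in> V \<Longrightarrow> (\<Sum>w\<in>V. complex_of_real (B v w) * x w) = mu * x v"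
    unfolding is_eigenvalue_def by blast
  define v where "v = vec n (\<lambda>i. x (f i))"
  obtain i0 where i0: "i0 < n" "f i0 = v0" using bij v0 by (auto simp: bij_betw_def)
  have "v \<noteq> 0\<^sub>v n"
  proof
    assume "v = 0\<^sub>v n"
    hence "v $ i0 = 0" using i0 by simp
    thus False using i0 v0 by (simp add: v_def)
  qed
  moreover have "?A *\<^sub>v v = mu \<cdot>\<^sub>v v"
  proof (rule eq_vecI)
    fix i assume i: "i < dim_vec (mu \<cdot>\<^sub>v v)"
    hence i': "i < n" by (simp add: v_def)
    have "(?A *\<^sub>v v) $ i = row ?A i \<bullet> v" using i' by simp
    also have "\<dots> = (\<Sum>j\<in>{0..<n}. row ?A i $ j * v $ j)"
      unfolding scalar_prod_def by (simp add: v_def)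
    also have "\<dots> = (\<Sum>j<n. complex_of_real (B (f i) (f j)) * x (f j))"
      unfolding atLeast0LessThan using i' by (intro sum.cong) (auto simp: v_def)
    also have "\<dots> = (\<Sum>w\<in>V. complex_of_real (B (f i) w) * x w)"
      using sum_reidx[OF bij, of "\<lambda>w. complex_of_real (B (f i) w) * x w"] by simp
    also have "\<dots> = mu * x (f i)" using eq fV i' by blast
    finally show "(?A *\<^sub>v v) $ i = (mu \<cdot>\<^sub>v v) $ i" using i' by (simp add: v_def)
  qed (simp add: v_def)
  ultimately show "eigenvalue ?A mu"
    unfolding eigenvalue_def eigenvector_def by (intro exI[of _ v]) (simp add: v_def)
next
  have fV: "\<And>i. i < n \<Longrightarrow> f i \<in> V" using bij by (auto simp: bij_betw_def)
  assume "eigenvalue ?A mu"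
  then obtain v where v: "v \<in> carrier_vec n" "v \<noteq> 0\<^sub>v n" "?A *\<^sub>v v = mu \<cdot>\<^sub>v v"
    unfolding eigenvalue_def eigenvector_def by auto
  define x where "x a = v $ (inv_into {0..<n} f a)" for a
  have xf: "\<And>j. j < n \<Longrightarrow> x (f j) = v $ j"
    using bij unfolding x_def bij_betw_def by (simp add: inv_into_f_f)
  obtain i0 where i0: "i0 < n" "v $ i0 \<noteq> 0"
  proof -
    have "\<not> (\<forall>i<n. v $ i = 0)"
    proof
      assume h: "\<forall>i<n. v $ i = 0"
      have "v = 0\<^sub>v n" by (rule eq_vecI) (use h v(1) in auto)
      thus False using v(2) by simp
    qed
    thus ?thesis using that by blast
  qed
  show "is_eigenvalue V B mu" unfolding is_eigenvalue_def
  proof (intro exI[of _ x] conjI)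
    show "\<exists>a\<in>V. x a \<noteq> 0" using i0 fV[of i0] xf[of i0] by (intro bexI[of _ "f i0"]) auto
    show "\<forall>a\<in>V. (\<Sum>w\<in>V. complex_of_real (B a w) * x w) = mu * x a"
    proof
      fix a assume "a \<in> V"
      then obtain i where i: "i < n" "a = f i" using bij by (auto simp: bij_betw_def)
      have "(\<Sum>w\<in>V. complex_of_real (B a w) * x w) = (\<Sum>j<n. complex_of_real (B (f i) (f j)) * x (f j))"
        using sum_reidx[OF bij, of "\<lambda>w. complex_of_real (B a w) * x w"] i by simp
      also have "\<dots> = (\<Sum>j<n. complex_of_real (B (f i) (f j)) * v $ j)"
        by (rule sum.cong) (auto simp: xf)
      also have "\<dots> = (\<Sum>j\<in>{0..<n}. row ?A i $ j * v $ j)"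
        unfolding atLeast0LessThan using i by (intro sum.cong) auto
      also have "\<dots> = row ?A i \<bullet> v"
        unfolding scalar_prod_def using v(1) by simp
      also have "\<dots> = (?A *\<^sub>v v) $ i" using i by simp
      also have "\<dots> = mu * v $ i" using v(3) v(1) i by simp
      finally show "(\<Sum>w\<in>V. complex_of_real (B a w) * x w) = mu * x a" using i xf by simp
    qed
  qed
qed



lemma qpow_mat:
  assumes "i < n" "j < n"
  shows "(mat n n (\<lambda>(i,j). complex_of_real (a i j)) ^\<^sub>m k) $$ (i,j) = complex_of_real (qpow a n k i j)"
  using assms(2)
proof (induction k arbitrary: j)
  case 0
  then show ?case using assms(1) by simp
next
  case (Suc k)
  let ?A = "mat n n (\<lambda>(i,j). complex_of_real (a i j))"
  have car: "?A ^\<^sub>m k \<in> carrier_mat n n" by (rule pow_carrier_mat) simp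
  have "(?A ^\<^sub>m Suc k) $$ (i,j) = row (?A ^\<^sub>m k) i \<bullet> col ?A j"
    using car assms(1) Suc.prems by simp
  also have "\<dots> = (\<Sum>l\<in>{0..<n}. row (?A ^\<^sub>m k) i $ l * col ?A j $ l)"
    unfolding scalar_prod_def using Suc.prems by simp
  also have "\<dots> = (\<Sum>l<n. complex_of_real (qpow a n k i l) * complex_of_real (a l j))"
    unfolding atLeast0LessThan
    by (rule sum.cong) (use car assms(1) Suc.prems Suc.IH in auto)
  also have "\<dots> = complex_of_real (qpow a n (Suc k) i j)" by simp
  finally show ?case .
qed



lemma eig_scale:
  assumes "is_eigenvalue V (\<lambda>v w. B v w / s) lam" "s \<noteq> 0"
  shows "is_eigenvalue V B (complex_of_real s * lam)"
proof -
  from assms(1) obtain x where x: "\<exists>v\<in>V. x v \<noteq> 0"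
    and eq: "\<forall>v\<in>V. (\<Sum>w\<in>V. complex_of_real (B v w / s) * x w) = lam * x v"
    unfolding is_eigenvalue_def by blast
  show ?thesis unfolding is_eigenvalue_def
  proof (intro exI[of _ x] conjI x ballI)
    fix v assume v: "v \<in> V"
    have "(\<Sum>w\<in>V. complex_of_real (B v w) * x w)
        = complex_of_real s * (\<Sum>w\<in>V. complex_of_real (B v w / s) * x w)"
      using assms(2) by (simp add: sum_distrib_left field_simps)
    also have "\<dots> = complex_of_real s * lam * x v" using eq v by simp
    finally show "(\<Sum>w\<in>V. complex_of_real (B v w) * x w) = complex_of_real s * lam * x v" .
  qed
qed

lemma sr_eq:
  assumes bij: "bij_betw f {0..<(n::nat)} V"
  shows "Defs.spectral_radius V B = Spectral_Radius.spectral_radius (mat n n (\<lambda>(i,j). complex_of_real (B (f i) (f j))))"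
proof -
  have "{cmod mu | mu. is_eigenvalue V B mu} = norm ` spectrum (mat n n (\<lambda>(i,j). complex_of_real (B (f i) (f j))))"
    unfolding spectrum_def using bridge[OF bij, of B] by auto
  thus ?thesis unfolding Defs.spectral_radius_def Spectral_Radius.spectral_radius_def by simp
qed

lemma subinv:
  fixes V :: "'a set" and B :: "'a \<Rightarrow> 'a \<Rightarrow> real" and z :: "'a \<Rightarrow> real"
  assumes fin: "finite V" and v0: "v0 \<in> V" "z v0 > 0"
    and nn: "\<And>v w. v \<in> V \<Longrightarrow> w \<in> V \<Longrightarrow> B v w \<ge> 0"
    and zn: "\<And>v. v \<in> V \<Longrightarrow> z v \<ge> 0"
    and ineq: "\<And>v. v \<in> V \<Longrightarrow> r * z v \<le> (\<Sum>w\<in>V. B v w * z w)"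
  shows "r \<le> Defs.spectral_radius V B"
proof (rule ccontr)
  assume "\<not> r \<le> Defs.spectral_radius V B"
  hence lt: "Defs.spectral_radius V B < r" by simp
  define n where "n = card V"
  obtain f where bij: "bij_betw f {0..<n} V" using ex_bij_betw_nat_finite[OF fin] n_def by blast
  have fV: "\<And>i. i < n \<Longrightarrow> f i \<in> V" using bij by (auto simp: bij_betw_def)
  have npos: "n > 0" using v0 fin n_def card_gt_0_iff by blast
  obtain i0 where i0: "i0 < n" "f i0 = v0" using bij v0 by (auto simp: bij_betw_def)
  define A where "A = mat n n (\<lambda>(i,j). complex_of_real (B (f i) (f j)))"
  have Ac: "A \<in> carrier_mat n n" unfolding A_def by simp
  define rho where "rho = Spectral_Radius.spectral_radius A"
  have rho_eq: "Defs.spectral_radius V B = rho" unfolding rho_def A_def by (rule sr_eq[OF bij])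
  have "rho \<in> norm ` spectrum A" unfolding rho_def by (rule spectral_radius_mem_max(1)[OF Ac npos])
  hence rho0: "rho \<ge> 0" by auto
  define s where "s = (rho + r) / 2"
  have s: "0 < s" "rho < s" "s < r" using lt rho0 rho_eq unfolding s_def by auto
  define a where "a i j = B (f i) (f j) / s" for i j
  define A2 where "A2 = mat n n (\<lambda>(i,j). complex_of_real (a i j))"
  have A2c: "A2 \<in> carrier_mat n n" unfolding A2_def by simp
  have A2': "A2 = mat n n (\<lambda>(i,j). complex_of_real ((\<lambda>v w. B v w / s) (f i) (f j)))"
    unfolding A2_def a_def by simp
  have "Spectral_Radius.spectral_radius A2 \<in> norm ` spectrum A2"
    by (rule spectral_radius_mem_max(1)[OF A2c npos])
  then obtain lam where lam: "eigenvalue A2 lam" "Spectral_Radius.spectral_radius A2 = norm lam"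
    unfolding spectrum_def by auto
  have "is_eigenvalue V (\<lambda>v w. B v w / s) lam" using lam(1) bridge[OF bij] A2' by simp
  hence "is_eigenvalue V B (complex_of_real s * lam)" by (rule eig_scale) (use s in simp)
  hence "eigenvalue A (complex_of_real s * lam)" using bridge[OF bij] A_def by simp
  hence "norm (complex_of_real s * lam) \<in> norm ` spectrum A" unfolding spectrum_def by auto
  hence "norm (complex_of_real s * lam) \<le> rho" unfolding rho_def
    by (rule spectral_radius_mem_max(2)[OF Ac npos])
  hence "s * norm lam \<le> rho" using s by (simp add: norm_mult)
  hence "s * norm lam < s * 1" using s by linarith
  hence "norm lam < 1" using s by (simp only: mult_less_cancel_left_pos)
  hence "Spectral_Radius.spectral_radius A2 < 1" using lam by simp
  then obtain c where c: "\<And>k. norm_bound (A2 ^\<^sub>m k) c"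
    using spectral_radius_jnf_norm_bound_less_1_upper_triangular[OF A2c] by blast
  have qle: "qpow a n k i j \<le> c" if "i < n" "j < n" for k i j
  proof -
    have "norm ((A2 ^\<^sub>m k) $$ (i,j)) \<le> c" using c[of k] that A2c
      unfolding norm_bound_def by simp
    moreover have "(A2 ^\<^sub>m k) $$ (i,j) = complex_of_real (qpow a n k i j)"
      unfolding A2_def by (rule qpow_mat[OF that])
    ultimately show ?thesis by simp
  qed
  define zz where "zz j = z (f j)" for j
  define q where "q = r / s"
  have q1: "q > 1" unfolding q_def using s by simp
  have a0: "\<And>i j. i < n \<Longrightarrow> j < n \<Longrightarrow> a i j \<ge> 0" unfolding a_def using nn fV s by simp
  have zz0: "\<And>j. j < n \<Longrightarrow> zz j \<ge> 0" unfolding zz_def using zn fV by simp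
  have ineq': "q * zz l \<le> (\<Sum>j<n. a l j * zz j)" if l: "l < n" for l
  proof -
    have "(\<Sum>j<n. a l j * zz j) = (\<Sum>j<n. B (f l) (f j) * z (f j)) / s"
      unfolding a_def zz_def by (simp add: sum_divide_distrib)
    also have "\<dots> = (\<Sum>w\<in>V. B (f l) w * z w) / s"
      using sum_reidx[OF bij, of "\<lambda>w. B (f l) w * z w"] by simp
    also have "\<dots> \<ge> r * z (f l) / s" using ineq[OF fV[OF l]] s by (simp add: divide_right_mono)
    finally show ?thesis unfolding q_def zz_def by simp
  qed
  define Z where "Z = (\<Sum>j<n. zz j)"
  have grow: "q ^ k * zz i0 \<le> c * Z" for k
  proof -
    have "q ^ k * zz i0 \<le> (\<Sum>j<n. qpow a n k i0 j * zz j)"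
      by (rule qpow_grow[OF a0 zz0 _ ineq' i0(1)]) (use q1 in auto)
    also have "\<dots> \<le> (\<Sum>j<n. c * zz j)"
      by (rule sum_mono, rule mult_right_mono) (auto intro: qle i0 zz0)
    also have "\<dots> = c * Z" unfolding Z_def by (simp add: sum_distrib_left)
    finally show ?thesis .
  qed
  have zi0: "zz i0 > 0" unfolding zz_def using i0 v0 by simp
  obtain k where k: "c * Z / zz i0 < q ^ k" using real_arch_pow[OF q1] by blast
  hence "c * Z < q ^ k * zz i0" using zi0 by (simp add: divide_less_eq)
  thus False using grow[of k] by simp
qed



lemma conn_card:
  fixes V :: "'a set" and E :: "('a \<times> 'a) set"
  assumes fin: "finite V" and r: "r \<in> V" and EV: "E \<subseteq> V \<times> V"
    and conn: "\<And>u w. u \<in> V \<Longrightarrow> w \<in> V \<Longrightarrow> (u, w) \<in> (E \<union> E\<inverse>)\<^sup>*"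
  shows "card V \<le> card E + 1"
proof -
  define S where "S = E \<union> E\<inverse>"
  define d where "d v = (LEAST k. (r, v) \<in> S ^^ k)" for v
  have ex: "\<exists>k. (r, v) \<in> S ^^ k" if "v \<in> V" for v
    using conn[OF r that] unfolding S_def by (simp add: rtrancl_power)
  have dv: "(r, v) \<in> S ^^ d v" if "v \<in> V" for v
    unfolding d_def by (rule LeastI_ex[OF ex[OF that]])
  have dle: "d v \<le> k" if "(r, v) \<in> S ^^ k" for v k
    unfolding d_def by (rule Least_le[where P="\<lambda>k. (r, v) \<in> S ^^ k"]) (rule that)
  define p where "p v = (SOME u. (r, u) \<in> S ^^ (d v - 1) \<and> (u, v) \<in> S)" for v
  have pprop: "(r, p v) \<in> S ^^ (d v - 1) \<and> (p v, v) \<in> S \<and> d v \<ge> 1 \<and> d (p v) = d v - 1"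
    if v: "v \<in> V" "v \<noteq> r" for v
  proof -
    have "d v \<noteq> 0"
    proof
      assume "d v = 0"
      with dv[OF v(1)] have "v = r" by simp
      with v show False by simp
    qed
    then obtain m where m: "d v = Suc m" by (cases "d v") auto
    with dv[OF v(1)] have "(r, v) \<in> S ^^ m O S" by simp
    hence "\<exists>u. (r, u) \<in> S ^^ (d v - 1) \<and> (u, v) \<in> S" using m by auto
    hence pv: "(r, p v) \<in> S ^^ (d v - 1) \<and> (p v, v) \<in> S" unfolding p_def by (rule someI_ex)
    have "d (p v) \<le> d v - 1" using pv dle by blast
    moreover have "(r, v) \<in> S ^^ Suc (d (p v))" using dv pv
    proof -
      have "(r, p v) \<in> S ^^ d (p v)"
        using LeastI_ex[of "\<lambda>k. (r, p v) \<in> S ^^ k"] pv unfolding d_def by blast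
      thus ?thesis using pv by auto
    qed
    hence "d v \<le> Suc (d (p v))" by (rule dle)
    ultimately show ?thesis using pv m by simp
  qed
  define g where "g v = (if (v, p v) \<in> E then (v, p v) else (p v, v))" for v
  have gE: "g v \<in> E" if "v \<in> V" "v \<noteq> r" for v
    using pprop[OF that] unfolding g_def S_def by auto
  have inj: "inj_on g (V - {r})"
  proof (rule inj_onI)
    fix v w assume v: "v \<in> V - {r}" and w: "w \<in> V - {r}" and eq: "g v = g w"
    show "v = w"
    proof (rule ccontr)
      assume ne: "v \<noteq> w"
      from eq ne have vw: "v = p w \<and> w = p v" unfolding g_def by (auto split: if_splits)
      have 1: "d (p v) = d v - 1 \<and> d v \<ge> 1" using pprop[of v] v by blast
      have 2: "d (p w) = d w - 1 \<and> d w \<ge> 1" using pprop[of w] w by blast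
      from 1 2 vw show False by (metis diff_le_self le_antisym n_not_Suc_n Suc_diff_1 le_less_trans less_one not_le)

    qed
  qed
  have finE: "finite E" using EV fin by (meson finite_SigmaI finite_subset)
  have "card (V - {r}) \<le> card E"
  proof (rule card_inj_on_le[OF inj _ finE])
    show "g ` (V - {r}) \<subseteq> E" using gE by blast
  qed
  thus ?thesis using r fin by simp
qed

lemma cycle_edge:
  assumes "finite R" "(x, x) \<in> R\<^sup>+"
  shows "\<exists>a b. (a, b) \<in> R \<and> (b, a) \<in> (R - {(a, b)})\<^sup>*"
  using assms
proof (induction R rule: finite_induct)
  case empty
  then show ?case by simp
next
  case (insert e R)
  obtain a b where e: "e = (a, b)" by (cases e)
  show ?case
  proof (cases "(x, x) \<in> R\<^sup>+")
    case True
    then obtain a' b' where ab: "(a', b') \<in> R" "(b', a') \<in> (R - {(a', b')})\<^sup>*" using insert.IH by blast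
    have "R - {(a', b')} \<subseteq> insert e R - {(a', b')}" by auto
    hence "(b', a') \<in> (insert e R - {(a', b')})\<^sup>*" using ab(2) rtrancl_mono by blast
    thus ?thesis using ab(1) by blast
  next
    case False
    with insert.prems have "(x, a) \<in> R\<^sup>* \<and> (b, x) \<in> R\<^sup>*"
      unfolding e trancl_insert by auto
    hence "(b, a) \<in> R\<^sup>*" by auto
    moreover have "insert e R - {(a, b)} = R" using insert.hyps e by auto
    ultimately have "(b, a) \<in> (insert e R - {(a, b)})\<^sup>*" by simp
    moreover have "(a, b) \<in> insert e R" using e by simp
    ultimately show ?thesis by blast
  qed
qed

lemma tree_acyclic:
  fixes V :: "'a set" and E :: "('a \<times> 'a) set"
  assumes fin: "finite V" and ne: "V \<noteq> {}" and EV: "E \<subseteq> V \<times> V"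
    and conn: "\<And>u w. u \<in> V \<Longrightarrow> w \<in> V \<Longrightarrow> (u, w) \<in> (E \<union> E\<inverse>)\<^sup>*"
    and cardE: "card E = card V - 1"
  shows "acyclic E"
proof (rule acyclicI, rule allI, rule notI)
  fix x assume cyc: "(x, x) \<in> E\<^sup>+"
  have finE: "finite E" using EV fin by (meson finite_SigmaI finite_subset)
  obtain a b where ab: "(a, b) \<in> E" "(b, a) \<in> (E - {(a, b)})\<^sup>*"
    using cycle_edge[OF finE cyc] by blast
  define E' where "E' = E - {(a, b)}"
  have sub: "E \<union> E\<inverse> \<subseteq> (E' \<union> E'\<inverse>)\<^sup>*"
  proof
    fix e assume "e \<in> E \<union> E\<inverse>"
    then obtain u w where e: "e = (u, w)" "(u, w) \<in> E \<or> (w, u) \<in> E" by (cases e) auto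
    show "e \<in> (E' \<union> E'\<inverse>)\<^sup>*"
    proof (cases "(u, w) = (a, b) \<or> (w, u) = (a, b)")
      case True
      have ba: "(b, a) \<in> (E' \<union> E'\<inverse>)\<^sup>*"
        using ab(2) rtrancl_mono[of E' "E' \<union> E'\<inverse>"] unfolding E'_def by blast
      have "(E' \<union> E'\<inverse>)\<inverse> = E' \<union> E'\<inverse>" by auto
      hence "(a, b) \<in> (E' \<union> E'\<inverse>)\<^sup>*" using ba rtrancl_converseI[of b a "E' \<union> E'\<inverse>"] by simp
      with ba True e show ?thesis by auto
    next
      case False
      with e have "(u, w) \<in> E' \<union> E'\<inverse>" unfolding E'_def by auto
      thus ?thesis using e by auto
    qed
  qed
  have conn': "(u, w) \<in> (E' \<union> E'\<inverse>)\<^sup>*" if "u \<in> V" "w \<in> V" for u w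
  proof -
    have "(u, w) \<in> ((E' \<union> E'\<inverse>)\<^sup>*)\<^sup>*" using conn[OF that] rtrancl_mono[OF sub] by blast
    thus ?thesis by simp
  qed
  obtain r where r: "r \<in> V" using ne by auto
  have "card V \<le> card E' + 1"
    by (rule conn_card[OF fin r _ conn']) (use EV in \<open>auto simp: E'_def\<close>)
  moreover have "card E' = card E - 1" unfolding E'_def using ab(1) finE by simp
  moreover have "card E \<ge> 1" using ab(1) finE card_0_eq by fastforce
  ultimately show False using cardE by simp
qed



lemma sr_attained:
  assumes fin: "finite V" and ne: "V \<noteq> {}"
  shows "\<exists>mu. is_eigenvalue V B mu \<and> Defs.spectral_radius V B = cmod mu"
proof -
  define n where "n = card V"
  obtain f where bij: "bij_betw f {0..<n} V" using ex_bij_betw_nat_finite[OF fin] unfolding n_def by (elim exE)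
  have npos: "n > 0" unfolding n_def using ne fin by (simp add: card_gt_0_iff)
  define A where "A = mat n n (\<lambda>(i,j). complex_of_real (B (f i) (f j)))"
  have Ac: "A \<in> carrier_mat n n" unfolding A_def by simp
  have "Spectral_Radius.spectral_radius A \<in> norm ` spectrum A"
    by (rule spectral_radius_mem_max(1)[OF Ac npos])
  then obtain mu where mu: "eigenvalue A mu" "Spectral_Radius.spectral_radius A = cmod mu"
    unfolding spectrum_def by auto
  have "is_eigenvalue V B mu" using mu(1) bridge[OF bij] A_def by simp
  moreover have "Defs.spectral_radius V B = cmod mu" using sr_eq[OF bij, of B] mu(2) A_def by simp
  ultimately show ?thesis by blast
qed

lemma A_alpha_nonneg:
  assumes "0 \<le> \<alpha>" "\<alpha> \<le> 1"
  shows "A_alpha \<alpha> E v w \<ge> 0"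
  using assms unfolding A_alpha_def by auto


theorem theorem2p7:
  fixes \<alpha> :: real
    and V Vs :: "'a set" and E Es :: "('a \<times> 'a) set"
    and T :: "'a \<Rightarrow> 'a set" and F :: "'a \<Rightarrow> ('a \<times> 'a) set"
  assumes "0 \<le> \<alpha>" "\<alpha> < 1"
    and "in_class_G V E Vs Es T F"
  shows "rho_alpha \<alpha> V (star_replace Vs Es T) \<ge> rho_alpha \<alpha> V E"
proof -
  define E' where "E' = star_replace Vs Es T"
  have a0: "0 \<le> \<alpha>" and a1: "\<alpha> < 1" using assms(1,2) .
  note cls = assms(3)[unfolded in_class_G_def]
  have SC: "strongly_connected Vs Es" and c2: "card Vs \<ge> 2"
    and tr: "\<forall>c\<in>Vs. c \<in> T c \<and> directed_tree (T c) (F c) \<and> T c \<inter> Vs = {c}"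
    and dj: "\<forall>c\<in>Vs. \<forall>d\<in>Vs. c \<noteq> d \<longrightarrow> T c \<inter> T d = {}"
    and VU: "V = (\<Union>c\<in>Vs. T c)" and EU: "E = Es \<union> (\<Union>c\<in>Vs. F c)"
    using cls by blast+
  have finVs: "finite Vs" and EsVs: "Es \<subseteq> Vs \<times> Vs" and Esl: "\<And>v. (v, v) \<notin> Es"
    using SC unfolding strongly_connected_def digraph_def by auto
  have dt: "\<And>c. c \<in> Vs \<Longrightarrow> directed_tree (T c) (F c)" using tr by blast
  have finT: "\<And>c. c \<in> Vs \<Longrightarrow> finite (T c)" and FT: "\<And>c. c \<in> Vs \<Longrightarrow> F c \<subseteq> T c \<times> T c"
    and Fl: "\<And>c v. c \<in> Vs \<Longrightarrow> (v, v) \<notin> F c"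
    using dt unfolding directed_tree_def digraph_def by blast+
  have cT: "\<And>c. c \<in> Vs \<Longrightarrow> c \<in> T c" and TVs: "\<And>c. c \<in> Vs \<Longrightarrow> T c \<inter> Vs = {c}"
    using tr by blast+
  have uniq: "\<And>c d u. c \<in> Vs \<Longrightarrow> d \<in> Vs \<Longrightarrow> u \<in> T c \<Longrightarrow> u \<in> T d \<Longrightarrow> c = d"
    using dj by blast
  have acF: "acyclic (F c)" if c: "c \<in> Vs" for c
  proof -
    have d: "directed_tree (T c) (F c)" by (rule dt[OF c])
    show ?thesis
    proof (rule tree_acyclic[OF finT[OF c]])
      show "T c \<noteq> {}" using d unfolding directed_tree_def by blast
      show "F c \<subseteq> T c \<times> T c" by (rule FT[OF c])
      show "\<And>u w. u \<in> T c \<Longrightarrow> w \<in> T c \<Longrightarrow> (u, w) \<in> (F c \<union> (F c)\<inverse>)\<^sup>*"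
        using d unfolding directed_tree_def by blast
      show "card (F c) = card (T c) - 1" using d unfolding directed_tree_def by blast
    qed
  qed
  have finV: "finite V" using VU finVs finT by simp
  have VsV: "Vs \<subseteq> V" using VU cT by blast
  have EV: "E \<subseteq> V \<times> V"
  proof
    fix e assume "e \<in> E"
    then show "e \<in> V \<times> V" unfolding EU using EsVs VsV FT VU by blast
  qed
  have E'V: "E' \<subseteq> V \<times> V" unfolding E'_def star_replace_def using EsVs VsV VU cT by blast
  have noloopE: "\<And>v. (v, v) \<notin> E" using EU Esl Fl by blast
  have noloopE': "\<And>v. (v, v) \<notin> E'" unfolding E'_def star_replace_def using Esl by blast
  have Vne: "V \<noteq> {}" using c2 VsV by auto
  have arcW: "\<exists>c\<in>Vs. (w, u) \<in> F c" if "(w, u) \<in> E" "w \<notin> Vs" for w u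
    using that EU EsVs by blast
  have arcVs: "(c, u) \<in> F c" if c: "c \<in> Vs" and cu: "(c, u) \<in> E" and u: "u \<notin> Vs" for c u
  proof -
    have "(c, u) \<notin> Es" using u EsVs by blast
    then obtain c' where c': "c' \<in> Vs" "(c, u) \<in> F c'" using cu EU by blast
    have "c \<in> T c'" using FT[OF c'(1)] c'(2) by blast
    hence "c = c'" using TVs[OF c'(1)] c by blast
    thus ?thesis using c' by simp
  qed
  have arcVsVs: "(c, u) \<in> Es" if c: "c \<in> Vs" and u: "u \<in> Vs" and cu: "(c, u) \<in> E" for c u
  proof (rule ccontr)
    assume "(c, u) \<notin> Es"
    then obtain c' where c': "c' \<in> Vs" "(c, u) \<in> F c'" using cu EU by blast
    have "c \<in> T c'" "u \<in> T c'" using FT[OF c'(1)] c'(2) by blast+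
    hence "c = c'" "u = c'" using TVs[OF c'(1)] c u by blast+
    thus False using Fl[OF c'(1)] c'(2) by simp
  qed
  have finout: "finite {u. (v, u) \<in> R}" if "R \<subseteq> V \<times> V" for v R
    using that finV by (rule_tac finite_subset[of _ V]) auto
  have od1: "outdeg E c \<le> outdeg E' c" if c: "c \<in> Vs" for c
    unfolding outdeg_def
  proof (rule card_mono[OF finout[OF E'V]])
    show "{u. (c, u) \<in> E} \<subseteq> {u. (c, u) \<in> E'}"
    proof
      fix u assume "u \<in> {u. (c, u) \<in> E}"
      hence cu: "(c, u) \<in> E" by simp
      show "u \<in> {u. (c, u) \<in> E'}"
      proof (cases "u \<in> Vs")
        case True
        thus ?thesis using arcVsVs[OF c True cu] unfolding E'_def star_replace_def by blast
      next
        case False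
        have "(c, u) \<in> F c" by (rule arcVs[OF c cu False])
        hence "u \<in> T c" "u \<noteq> c" using FT[OF c] Fl[OF c] by blast+
        thus ?thesis using c unfolding E'_def star_replace_def by blast
      qed
    qed
  qed
  have od2: "card (T c) - 1 \<le> outdeg E' c" if c: "c \<in> Vs" for c
  proof -
    have "T c - {c} \<subseteq> {u. (c, u) \<in> E'}" using c unfolding E'_def star_replace_def by blast
    hence "card (T c - {c}) \<le> outdeg E' c" unfolding outdeg_def
      by (rule card_mono[OF finout[OF E'V]])
    thus ?thesis using cT[OF c] finT[OF c] by simp
  qed
  have od3: "outdeg E w \<le> card (T c) - 1" if c: "c \<in> Vs" and w: "w \<in> T c" "w \<notin> Vs" for c w
  proof -
    have "{u. (w, u) \<in> E} \<subseteq> T c - {w}"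
    proof
      fix u assume "u \<in> {u. (w, u) \<in> E}"
      hence wu: "(w, u) \<in> E" by simp
      obtain c' where c': "c' \<in> Vs" "(w, u) \<in> F c'" using arcW[OF wu w(2)] by blast
      have "w \<in> T c'" "u \<in> T c'" using FT[OF c'(1)] c'(2) by blast+
      hence "c' = c" using uniq[OF c'(1) c] w by blast
      thus "u \<in> T c - {w}" using \<open>u \<in> T c'\<close> Fl[OF c'(1)] c'(2) by blast
    qed
    hence "outdeg E w \<le> card (T c - {w})" unfolding outdeg_def
      by (rule card_mono[OF finite_Diff[OF finT[OF c]]])
    thus ?thesis using w finT[OF c] by simp
  qed
  define M where "M = A_alpha \<alpha> E"
  define M' where "M' = A_alpha \<alpha> E'"
  have Mnn: "\<And>v w. M v w \<ge> 0" unfolding M_def by (rule A_alpha_nonneg[OF a0]) (use a1 in simp)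
  have M'nn: "\<And>v w. M' v w \<ge> 0" unfolding M'_def by (rule A_alpha_nonneg[OF a0]) (use a1 in simp)
  obtain mu where mu: "is_eigenvalue V M mu" "Defs.spectral_radius V M = cmod mu"
    using sr_attained[OF finV Vne] by blast
  then obtain x where xnz: "\<exists>v\<in>V. x v \<noteq> 0"
    and xeq: "\<And>v. v \<in> V \<Longrightarrow> (\<Sum>w\<in>V. complex_of_real (M v w) * x w) = mu * x v"
    unfolding is_eigenvalue_def by blast
  define r where "r = cmod mu"
  have r0: "r \<ge> 0" unfolding r_def by simp
  have rho_eq: "rho_alpha \<alpha> V E = r" unfolding rho_alpha_def r_def M_def[symmetric] using mu(2) by simp
  have rho'_eq: "rho_alpha \<alpha> V (star_replace Vs Es T) = Defs.spectral_radius V M'"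
    unfolding rho_alpha_def M'_def E'_def by simp
  have main: "r \<le> Defs.spectral_radius V M'"
  proof (cases "\<exists>c\<in>Vs. r \<le> \<alpha> * real (outdeg E' c)")
    case True
    then obtain c where c: "c \<in> Vs" "r \<le> \<alpha> * real (outdeg E' c)" by blast
    have cV: "c \<in> V" using c VsV by blast
    define z where "z v = (if v = c then 1 else 0 :: real)" for v
    show ?thesis
    proof (rule subinv[OF finV cV, of z])
      show "z c > 0" unfolding z_def by simp
      show "\<And>v w. v \<in> V \<Longrightarrow> w \<in> V \<Longrightarrow> M' v w \<ge> 0" using M'nn by blast
      show "\<And>v. v \<in> V \<Longrightarrow> z v \<ge> 0" unfolding z_def by simp
      fix v assume v: "v \<in> V"
      have "(\<Sum>w\<in>V. M' v w * z w) = (\<Sum>w\<in>V. if w = c then M' v c else 0)"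
        by (rule sum.cong) (auto simp: z_def)
      also have "\<dots> = M' v c" using cV finV by simp
      finally have eq: "(\<Sum>w\<in>V. M' v w * z w) = M' v c" .
      show "r * z v \<le> (\<Sum>w\<in>V. M' v w * z w)"
      proof (cases "v = c")
        case True
        have "M' c c = \<alpha> * real (outdeg E' c)" unfolding M'_def A_alpha_def using noloopE' by simp
        thus ?thesis using eq True c(2) unfolding z_def by simp
      next
        case False
        thus ?thesis using eq M'nn unfolding z_def by simp
      qed
    qed
  next
    case False
    hence big: "\<And>c. c \<in> Vs \<Longrightarrow> \<alpha> * real (outdeg E' c) < r" by (meson not_le)
    have bigW: "\<alpha> * real (outdeg E w) < r" if w: "w \<in> V" "w \<notin> Vs" for w
    proof -
      obtain c where c: "c \<in> Vs" "w \<in> T c" using w VU by blast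
      have "outdeg E w \<le> outdeg E' c" using od3[OF c w(2)] od2[OF c(1)] by simp
      hence "\<alpha> * real (outdeg E w) \<le> \<alpha> * real (outdeg E' c)" using a0 by (simp add: mult_left_mono)
      thus ?thesis using big[OF c(1)] by simp
    qed
    have rowzero: "x w = 0" if w: "w \<in> V" "w \<notin> Vs" and h: "\<And>u. (w, u) \<in> E \<Longrightarrow> x u = 0" for w
    proof -
      have "(\<Sum>u\<in>V. complex_of_real (M w u) * x u)
          = (\<Sum>u\<in>V. if u = w then complex_of_real (\<alpha> * real (outdeg E w)) * x w else 0)"
      proof (rule sum.cong[OF refl])
        fix u assume "u \<in> V"
        show "complex_of_real (M w u) * x u
          = (if u = w then complex_of_real (\<alpha> * real (outdeg E w)) * x w else 0)"
        proof (cases "u = w")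
          case True
          thus ?thesis unfolding M_def A_alpha_def using noloopE by simp
        next
          case False
          show ?thesis
          proof (cases "(w, u) \<in> E")
            case True
            thus ?thesis using h False by simp
          next
            case nE: False
            thus ?thesis unfolding M_def A_alpha_def using False by simp
          qed
        qed
      qed
      also have "\<dots> = complex_of_real (\<alpha> * real (outdeg E w)) * x w" using w(1) finV by (simp only: sum.delta if_True)
      finally have h: "(\<Sum>u\<in>V. complex_of_real (M w u) * x u) = complex_of_real (\<alpha> * real (outdeg E w)) * x w" .
      have "complex_of_real (\<alpha> * real (outdeg E w)) * x w = mu * x w"
        by (rule trans[OF h[symmetric] xeq[OF w(1)]])
      note e = this
      have prod0: "(mu - complex_of_real (\<alpha> * real (outdeg E w))) * x w = 0"
        unfolding left_diff_distrib e by simp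
      have "mu \<noteq> complex_of_real (\<alpha> * real (outdeg E w))"
      proof
        assume "mu = complex_of_real (\<alpha> * real (outdeg E w))"
        hence "r = cmod (complex_of_real (\<alpha> * real (outdeg E w)))" unfolding r_def by (simp only:)
        also have "\<dots> = \<bar>\<alpha> * real (outdeg E w)\<bar>" by (rule norm_of_real)
        also have "\<dots> = \<alpha> * real (outdeg E w)" using a0 by simp
        finally have "r = \<alpha> * real (outdeg E w)" .
        thus False using bigW[OF w] by simp
      qed
      thus ?thesis using prod0 by simp
    qed
    have tr_loc: "\<exists>c\<in>Vs. (a, b) \<in> (F c)\<^sup>+" if "(a, b) \<in> (\<Union>c\<in>Vs. F c)\<^sup>+" for a b
      using that
    proof (induction rule: trancl_induct)
      case (base y)
      thus ?case by blast
    next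
      case (step y z)
      then obtain c where c: "c \<in> Vs" "(a, y) \<in> (F c)\<^sup>+" by blast
      obtain c' where c': "c' \<in> Vs" "(y, z) \<in> F c'" using step.hyps(2) by blast
      have "(F c)\<^sup>+ \<subseteq> T c \<times> T c" by (rule trancl_subset_Sigma[OF FT[OF c(1)]])
      hence "y \<in> T c" using c(2) by blast
      moreover have "y \<in> T c'" using FT[OF c'(1)] c'(2) by blast
      ultimately have "c = c'" using uniq c c' by blast
      hence "(a, z) \<in> (F c)\<^sup>+" using c(2) c'(2) by simp
      thus ?case using c(1) by blast
    qed
    have acFall: "acyclic (\<Union>c\<in>Vs. F c)"
      unfolding acyclic_def
    proof (intro allI notI)
      fix a assume "(a, a) \<in> (\<Union>c\<in>Vs. F c)\<^sup>+"
      then obtain c where "c \<in> Vs" "(a, a) \<in> (F c)\<^sup>+" using tr_loc by blast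
      thus False using acF unfolding acyclic_def by blast
    qed
    have zeroS: "\<forall>w\<in>S. x w = 0"
      if SW: "S \<subseteq> V - Vs" and cl: "\<forall>w\<in>S. \<forall>u. (w, u) \<in> E \<longrightarrow> u \<in> S \<or> x u = 0" for S
    proof -
      define R where "R = {(u, w). (w, u) \<in> E \<and> w \<in> S \<and> u \<in> S}"
      have RF: "R\<inverse> \<subseteq> (\<Union>c\<in>Vs. F c)"
      proof
        fix e assume "e \<in> R\<inverse>"
        then obtain w u where e: "e = (w, u)" "(w, u) \<in> E" "w \<in> S" by (auto simp: R_def)
        thus "e \<in> (\<Union>c\<in>Vs. F c)" using arcW[of w u] SW by blast
      qed
      have finR: "finite R"
      proof (rule finite_subset[of _ "V \<times> V"])
        show "R \<subseteq> V \<times> V" using EV unfolding R_def by blast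
        show "finite (V \<times> V)" using finV by simp
      qed
      have "acyclic (R\<inverse>)" by (rule acyclic_subset[OF acFall RF])
      hence "acyclic R" by (simp add: acyclic_converse)
      hence wfR: "wf R" by (rule finite_acyclic_wf[OF finR])
      have "w \<in> S \<longrightarrow> x w = 0" for w
      proof (induction w rule: wf_induct[OF wfR])
        case (1 w)
        show ?case
        proof
          assume wS: "w \<in> S"
          have "x u = 0" if wu: "(w, u) \<in> E" for u
          proof -
            have "u \<in> S \<or> x u = 0" using cl wS wu by blast
            thus ?thesis
            proof
              assume uS: "u \<in> S"
              hence "(u, w) \<in> R" unfolding R_def using wu wS by blast
              thus ?thesis using 1 uS by blast
            qed
          qed
          thus "x w = 0" using rowzero[of w] wS SW by blast
        qed
      qed
      thus ?thesis by blast
    qed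
    have xVs: "\<exists>c\<in>Vs. x c \<noteq> 0"
    proof (rule ccontr)
      assume "\<not> (\<exists>c\<in>Vs. x c \<noteq> 0)"
      hence z0: "\<forall>c\<in>Vs. x c = 0" by blast
      have "\<forall>w\<in>V - Vs. x w = 0"
      proof (rule zeroS)
        show "V - Vs \<subseteq> V - Vs" by simp
        show "\<forall>w\<in>V - Vs. \<forall>u. (w, u) \<in> E \<longrightarrow> u \<in> V - Vs \<or> x u = 0"
          using EV z0 by blast
      qed
      with z0 xnz show False by blast
    qed
    have path: "w \<notin> Vs \<longrightarrow> (\<exists>c'\<in>Vs. w \<in> T c' \<and> (c', w) \<in> (F c')\<^sup>+)"
      if "(c, w) \<in> E\<^sup>*" "c \<in> Vs" for c w
      using that(1)
    proof (induction rule: rtrancl_induct)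
      case base
      then show ?case using that(2) by blast
    next
      case (step y z)
      show ?case
      proof
        assume z: "z \<notin> Vs"
        show "\<exists>c'\<in>Vs. z \<in> T c' \<and> (c', z) \<in> (F c')\<^sup>+"
        proof (cases "y \<in> Vs")
          case True
          have "(y, z) \<in> F y" by (rule arcVs[OF True step.hyps(2) z])
          thus ?thesis using FT[OF True] True by blast
        next
          case False
          then obtain c' where c': "c' \<in> Vs" "y \<in> T c'" "(c', y) \<in> (F c')\<^sup>+" using step.IH by blast
          obtain c'' where c'': "c'' \<in> Vs" "(y, z) \<in> F c''" using arcW[OF step.hyps(2) False] by blast
          have "y \<in> T c''" using FT[OF c''(1)] c''(2) by blast
          hence "c'' = c'" using uniq c' c'' by blast
          hence "(c', z) \<in> (F c')\<^sup>+" "z \<in> T c'" using c'(3) c''(2) FT[OF c'(1)] by auto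
          thus ?thesis using c'(1) by blast
        qed
      qed
    qed
    define D where "D = {w \<in> V - Vs. \<exists>c\<in>Vs. (c, w) \<in> E\<^sup>*}"
    have xD: "\<forall>w\<in>D. x w = 0"
    proof (rule zeroS)
      show "D \<subseteq> V - Vs" unfolding D_def by blast
      show "\<forall>w\<in>D. \<forall>u. (w, u) \<in> E \<longrightarrow> u \<in> D \<or> x u = 0"
      proof (intro ballI allI impI)
        fix w u assume wD: "w \<in> D" and wu: "(w, u) \<in> E"
        obtain c where c: "c \<in> Vs" "(c, w) \<in> E\<^sup>*" and wV: "w \<in> V" "w \<notin> Vs"
          using wD unfolding D_def by blast
        have uV: "u \<in> V" using EV wu by blast
        have "u \<notin> Vs"
        proof
          assume uVs: "u \<in> Vs"
          obtain c' where c': "c' \<in> Vs" "w \<in> T c'" "(c', w) \<in> (F c')\<^sup>+"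
            using path[OF c(2) c(1)] wV(2) by blast
          obtain c'' where c'': "c'' \<in> Vs" "(w, u) \<in> F c''" using arcW[OF wu wV(2)] by blast
          have "w \<in> T c''" using FT[OF c''(1)] c''(2) by blast
          hence cc: "c'' = c'" using uniq c' c'' by blast
          have "u \<in> T c'" using FT[OF c''(1)] c''(2) cc by blast
          hence "u = c'" using TVs[OF c'(1)] uVs by blast
          hence "(c', c') \<in> (F c')\<^sup>+" using c'(3) c''(2) cc by simp
          thus False using acF[OF c'(1)] unfolding acyclic_def by blast
        qed
        moreover have "(c, u) \<in> E\<^sup>*" using c(2) wu by (rule rtrancl_into_rtrancl)
        ultimately show "u \<in> D \<or> x u = 0" unfolding D_def using uV c(1) by blast
      qed
    qed
    obtain c0 where c0: "c0 \<in> Vs" "x c0 \<noteq> 0" using xVs by blast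
    have c0V: "c0 \<in> V" using c0 VsV by blast
    define z where "z v = (if v \<in> Vs then cmod (x v) else 0)" for v
    show ?thesis
    proof (rule subinv[OF finV c0V, of z])
      show "z c0 > 0" unfolding z_def using c0 by simp
      show "\<And>v w. v \<in> V \<Longrightarrow> w \<in> V \<Longrightarrow> M' v w \<ge> 0" using M'nn by blast
      show "\<And>v. v \<in> V \<Longrightarrow> z v \<ge> 0" unfolding z_def by simp
      fix v assume v: "v \<in> V"
      show "r * z v \<le> (\<Sum>w\<in>V. M' v w * z w)"
      proof (cases "v \<in> Vs")
        case False
        have "0 \<le> (\<Sum>w\<in>V. M' v w * z w)"
          by (rule sum_nonneg) (simp add: M'nn z_def)
        thus ?thesis using False unfolding z_def by simp
      next
        case vVs: True
        have "r * z v = cmod (mu * x v)" unfolding r_def z_def using vVs by (simp add: norm_mult)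
        also have "\<dots> = cmod (\<Sum>w\<in>V. complex_of_real (M v w) * x w)" using xeq[OF v] by simp
        also have "\<dots> \<le> (\<Sum>w\<in>V. cmod (complex_of_real (M v w) * x w))" by (rule norm_sum)
        also have "\<dots> = (\<Sum>w\<in>V. M v w * cmod (x w))"
          by (rule sum.cong[OF refl]) (simp add: norm_mult Mnn)
        also have "\<dots> = (\<Sum>w\<in>V. M v w * z w)"
        proof (rule sum.cong[OF refl])
          fix w assume w: "w \<in> V"
          show "M v w * cmod (x w) = M v w * z w"
          proof (cases "w \<in> Vs")
            case True
            thus ?thesis unfolding z_def by simp
          next
            case wn: False
            show ?thesis
            proof (cases "(v, w) \<in> E")
              case True
              hence "w \<in> D" unfolding D_def using w wn vVs by blast
              hence "x w = 0" using xD by blast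
              thus ?thesis unfolding z_def using wn by simp
            next
              case False
              have "v \<noteq> w" using vVs wn by blast
              hence "M v w = 0" unfolding M_def A_alpha_def using False by simp
              thus ?thesis by simp
            qed
          qed
        qed
        also have "\<dots> \<le> (\<Sum>w\<in>V. M' v w * z w)"
        proof (rule sum_mono)
          fix w assume w: "w \<in> V"
          show "M v w * z w \<le> M' v w * z w"
          proof (cases "w \<in> Vs")
            case False
            thus ?thesis unfolding z_def by simp
          next
            case wVs: True
            have "M v w \<le> M' v w"
            proof (cases "w = v")
              case True
              have "\<alpha> * real (outdeg E v) \<le> \<alpha> * real (outdeg E' v)"
                using od1[OF vVs] a0 by (simp add: mult_left_mono)
              thus ?thesis unfolding M_def M'_def A_alpha_def using True noloopE noloopE' by simp
            next
              case False
              have "(v, w) \<in> E \<Longrightarrow> (v, w) \<in> E'"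
                using arcVsVs[OF vVs wVs] unfolding E'_def star_replace_def by blast
              thus ?thesis unfolding M_def M'_def A_alpha_def using False a1 by auto
            qed
            moreover have "z w \<ge> 0" unfolding z_def by simp
            ultimately show ?thesis by (rule mult_right_mono)
          qed
        qed
        finally show ?thesis .
      qed
    qed
  qed
  show ?thesis using main rho_eq rho'_eq by simp
qed

end
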